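(* Let $n\ge 2$, $A_0,\dots,A_{n-1}\in\mathbb{R}$, $A_n=1$, $F(a)=\sum_{k=0}^nA_ka^k$, and let $x(a)$ be a solution of $\mathrm{Op}_n[F]x=0$ on an open interval $I\subset(0,\infty)$ with $\dot x\neq0$ on $I$. Then the metric $$g=\frac{\dot x^2}{a^2}\,da^2+\frac{dy^2}{a}$$ on $I\times\mathbb{R}$ is never of constant curvature. Moreover $g=dX^2+dY^2-dZ^2$ (an embedding in $\mathbb{R}^{2,1}$), where $$X=\frac{y}{\sqrt a},\qquad Y-Z=-\frac1{\sqrt a},\qquad Y+Z=\frac{y^2}{\sqrt a}+2\int\frac{\dot x^2}{\sqrt a}\,da .$$
   Context: A dot denotes $d/da$, $D_a=d/da$, $F^{(m)}=D_a^mF$; Pochhammer symbol $(z)_0=1$, $(z)_s=z(z+1)\cdots(z+s-1)$; $\mathrm{Op}_n[F]=\sum_{s=0}^n\frac{F^{(n-s)}}{(n-s)!}\frac{1}{(1/2)_s}D_a^s$. *)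

theory Defs
  imports "HOL-Analysis.Analysis"
begin

definition polyF :: "nat \<Rightarrow> (nat \<Rightarrow> real) \<Rightarrow> real \<Rightarrow> real" where
  "polyF n A a = (\<Sum>k\<le>n. A k * a ^ k)"

definition OpF :: "nat \<Rightarrow> (real \<Rightarrow> real) \<Rightarrow> (real \<Rightarrow> real) \<Rightarrow> real \<Rightarrow> real" where
  "OpF n F x a = (\<Sum>s=0..n. ((deriv ^^ (n - s)) F a / fact (n - s))
                          * (1 / pochhammer (1/2 :: real) s) * (deriv ^^ s) x a)"

definition pd1 :: "(real \<times> real \<Rightarrow> real) \<Rightarrow> real \<times> real \<Rightarrow> real" where
  "pd1 f p = deriv (\<lambda>t. f (t, snd p)) (fst p)"

definition pd2 :: "(real \<times> real \<Rightarrow> real) \<Rightarrow> real \<times> real \<Rightarrow> real" where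
  "pd2 f p = deriv (\<lambda>t. f (fst p, t)) (snd p)"

definition gauss_curv_orth ::
  "(real \<times> real \<Rightarrow> real) \<Rightarrow> (real \<times> real \<Rightarrow> real) \<Rightarrow> real \<times> real \<Rightarrow> real" where
  "gauss_curv_orth E G p =
     - (1 / (2 * sqrt (E p * G p))) *
       (pd1 (\<lambda>q. pd1 G q / sqrt (E q * G q)) p + pd2 (\<lambda>q. pd2 E q / sqrt (E q * G q)) p)"

end

theory Submission imports Defs "HOL-Computational_Algebra.Polynomial" begin



lemma poch_nz: fixes c :: real assumes "c > -1" "c \<noteq> 0" shows "pochhammer c k \<noteq> 0"
proof
  assume "pochhammer c k = 0"
  then obtain j where "j < k" "c = - of_nat j" by (auto simp: pochhammer_eq_0_iff)
  with assms show False by (cases j) auto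
qed

lemma Vsum: fixes c :: real assumes "c > -1" "c \<noteq> 0"
  shows "(\<Sum>j\<le>n. (-1)^j * real (n choose j) / (real j + c)) = fact n / pochhammer c (Suc n)"
  using assms
proof (induction n arbitrary: c)
  case 0 then show ?case by simp
next
  case (Suc n)
  have IH1: "(\<Sum>j\<le>n. (-1)^j * real (n choose j) / (real j + c)) = fact n / pochhammer c (Suc n)"
    using Suc by blast
  have IH2: "(\<Sum>j\<le>n. (-1)^j * real (n choose j) / (real j + (c+1))) = fact n / pochhammer (c+1) (Suc n)"
    using Suc.IH[of "c+1"] Suc.prems by auto
  have A: "(\<Sum>j\<le>Suc n. (-1)^j * real (Suc n choose j) / (real j + c))
     = 1/c + (\<Sum>i\<le>n. (-1)^(Suc i) * real (n choose i) / (real i + (c+1)))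
           + (\<Sum>i\<le>n. (-1)^(Suc i) * real (n choose Suc i) / (real (Suc i) + c))"
    by (subst sum.atMost_Suc_shift) (simp add: sum.distrib[symmetric] diff_divide_distrib algebra_simps)
  have B: "(\<Sum>i\<le>n. (-1)^(Suc i) * real (n choose Suc i) / (real (Suc i) + c))
       = (\<Sum>j\<le>Suc n. (-1)^j * real (n choose j) / (real j + c)) - 1/c"
    by (subst sum.atMost_Suc_shift) simp
  have C: "(\<Sum>j\<le>Suc n. (-1)^j * real (n choose j) / (real j + c)) = (\<Sum>j\<le>n. (-1)^j * real (n choose j) / (real j + c))"
    by simp
  have D: "(\<Sum>i\<le>n. (-1)^(Suc i) * real (n choose i) / (real i + (c+1))) = - (\<Sum>j\<le>n. (-1)^j * real (n choose j) / (real j + (c+1)))"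
    by (simp add: sum_negf)
  have P1: "pochhammer c (Suc (Suc n)) = c * pochhammer (c+1) (Suc n)" by (rule pochhammer_rec)
  have P2: "pochhammer c (Suc (Suc n)) = pochhammer c (Suc n) * (c + of_nat (Suc n))" by (rule pochhammer_Suc)
  have nz1: "pochhammer c (Suc n) \<noteq> 0" using poch_nz Suc.prems by blast
  have nz2: "pochhammer (c+1) (Suc n) \<noteq> 0" using poch_nz[of "c+1"] Suc.prems by auto
  have "fact n / pochhammer c (Suc n) - fact n / pochhammer (c+1) (Suc n) = fact (Suc n) / pochhammer c (Suc (Suc n))"
  proof -
    have "fact n / pochhammer c (Suc n) = fact n * (c + of_nat (Suc n)) / pochhammer c (Suc (Suc n))"
    proof -
      have "c + of_nat (Suc n) \<noteq> 0" using Suc.prems by simp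
      then show ?thesis using nz1 unfolding P2 by (simp add: divide_simps)
    qed
    moreover have "fact n / pochhammer (c+1) (Suc n) = fact n * c / pochhammer c (Suc (Suc n))"
      using Suc.prems nz2 unfolding P1 by (simp add: field_simps)
    ultimately show ?thesis by (simp add: diff_divide_distrib[symmetric] algebra_simps)
  qed
  then show ?case using A B C D IH1 IH2 by linarith
qed

lemma qS_eq: "1 + (\<Sum>s=1..n. (-1)^(s-1) * real (n choose s) / (real s - 1/2)) / 2 = fact n / pochhammer (1/2) n"
proof -
  have V: "(\<Sum>j\<le>n. (-1)^j * real (n choose j) / (real j + (-1/2))) = fact n / pochhammer (-1/2) (Suc n)"
    by (rule Vsum) auto
  have "(\<Sum>j\<le>n. (-1)^j * real (n choose j) / (real j + (-1/2)))
      = -2 + (\<Sum>s=1..n. (-1)^s * real (n choose s) / (real s + (-1/2)))"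
    by (simp add: atMost_atLeast0 sum.atLeast_Suc_atMost)
  also have "(\<Sum>s=1..n. (-1)^s * real (n choose s) / (real s + (-1/2)))
      = - (\<Sum>s=1..n. (-1)^(s-1) * real (n choose s) / (real s - 1/2))"
    by (subst sum_negf[symmetric], rule sum.cong) (auto simp: power_eq_if)
  finally have "-2 - (\<Sum>s=1..n. (-1)^(s-1) * real (n choose s) / (real s - 1/2)) = fact n / pochhammer (-1/2) (Suc n)"
    using V by simp
  then obtain S where S: "S = (\<Sum>s=1..n. (-1)^(s-1) * real (n choose s) / (real s - 1/2))"
    and SE: "-2 - S = fact n / pochhammer (-1/2) (Suc n)" by blast
  moreover have "pochhammer (-1/2::real) (Suc n) = (-1/2) * pochhammer (1/2) n"
    by (simp add: pochhammer_rec)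
  moreover have "pochhammer (1/2::real) n \<noteq> 0" by (rule poch_nz) auto
  ultimately show ?thesis unfolding S[symmetric] using SE by (simp add: field_simps)
qed

lemma coeff_pderiv_iter: "coeff ((pderiv ^^ m) (p::real poly)) i = pochhammer (of_nat (Suc i)) m * coeff p (i + m)"
proof (induction m arbitrary: i)
  case 0 then show ?case by simp
next
  case (Suc m)
  have "coeff ((pderiv ^^ Suc m) p) i = of_nat (Suc i) * coeff ((pderiv ^^ m) p) (Suc i)"
    by (simp add: coeff_pderiv)
  also have "\<dots> = of_nat (Suc i) * pochhammer (of_nat (Suc (Suc i))) m * coeff p (i + Suc m)"
    using Suc by simp
  also have "of_nat (Suc i) * pochhammer (of_nat (Suc (Suc i))) m = pochhammer (of_nat (Suc i) :: real) (Suc m)"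
    by (simp add: pochhammer_rec add_ac)
  finally show ?case .
qed

lemma degree_pderiv_iter: "degree ((pderiv ^^ m) (p::real poly)) = degree p - m"
  by (induction m) (auto simp: degree_pderiv)

lemma deriv_poly_iter: "(deriv ^^ m) (poly p) = poly ((pderiv ^^ m) (p::real poly))"
proof (induction m)
  case 0 then show ?case by simp
next
  case (Suc m)
  show ?case by (simp add: Suc) (rule ext, rule DERIV_imp_deriv, rule poly_DERIV)
qed

lemma poly_pA: "(\<lambda>a. (\<Sum>k\<le>n. A k * a ^ k)) = poly (\<Sum>k\<le>n. monom ((A::nat\<Rightarrow>real) k) k)"
  by (rule ext) (simp add: poly_sum poly_monom)

lemma coeff_pA: "coeff (\<Sum>k\<le>n. monom (A k) k) i = (if i \<le> n then A i else (0::real))"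
  by (simp add: coeff_sum coeff_monom)

lemma poch_fact: "pochhammer (of_nat (Suc s) :: real) k * fact s = fact (s + k)"
proof (induction k)
  case 0 then show ?case by simp
next
  case (Suc k)
  have "pochhammer (of_nat (Suc s) :: real) (Suc k) * fact s = (pochhammer (of_nat (Suc s)) k * fact s) * (of_nat (Suc s) + of_nat k)"
    by (simp add: pochhammer_Suc algebra_simps)
  also have "\<dots> = fact (s + Suc k)" using Suc by (simp add: algebra_simps)
  finally show ?case .
qed

definition pA :: "nat \<Rightarrow> (nat \<Rightarrow> real) \<Rightarrow> real poly" where
  "pA n A = (\<Sum>k\<le>n. monom (A k) k)"
definition Dp :: "real \<Rightarrow> real \<Rightarrow> real poly" where "Dp c d = [:-4*c, d:]"
definition Qp :: "nat \<Rightarrow> (nat \<Rightarrow> real) \<Rightarrow> real \<Rightarrow> real \<Rightarrow> real poly" where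
  "Qp n A c d = (\<Sum>s=1..n. smult ((-1)^(s-1) / (real s - 1/2) * d^(s-1) / fact (n-s))
                    ((pderiv^^(n-s)) (pA n A) * (Dp c d)^(n-s)))"
definition Wp :: "nat \<Rightarrow> (nat \<Rightarrow> real) \<Rightarrow> real \<Rightarrow> real \<Rightarrow> real poly" where
  "Wp n A c d = (Dp c d)^n + Dp c d * pderiv (Qp n A c d) - smult ((real n - 1/2) * d) (Qp n A c d)"

lemma degree_pA: assumes "A n = 1" shows "degree (pA n A) = n"
proof (rule antisym)
  show "degree (pA n A) \<le> n" by (rule degree_le) (simp add: pA_def coeff_pA)
  show "n \<le> degree (pA n A)" by (rule le_degree) (simp add: pA_def coeff_pA assms)
qed

lemma coeff_Qp_high: "coeff (Qp n A c d) (Suc n) = 0"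
proof -
  have "coeff ((pderiv^^(n-s)) (pA n A) * (Dp c d)^(n-s)) (Suc n) = 0" if "s \<in> {1..n}" for s
  proof (rule coeff_eq_0)
    have "degree (pA n A) \<le> n" by (rule degree_le) (simp add: pA_def coeff_pA)
    then have "degree ((pderiv^^(n-s)) (pA n A)) \<le> s"
      using that by (simp add: degree_pderiv_iter)
    moreover have "degree ((Dp c d)^(n-s)) \<le> n - s"
      by (rule order.trans[OF degree_power_le]) (simp add: Dp_def)
    ultimately have "degree ((pderiv^^(n-s)) (pA n A) * (Dp c d)^(n-s)) \<le> n"
      using that by (intro order.trans[OF degree_mult_le]) auto
    then show "degree ((pderiv^^(n-s)) (pA n A) * (Dp c d)^(n-s)) < Suc n" by simp
  qed
  then show ?thesis by (simp add: Qp_def coeff_sum)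
qed

lemma coeff_Qp_top: assumes "A n = 1" "d \<noteq> 0"
  shows "coeff (Qp n A c d) n = d^(n-1) * (\<Sum>s=1..n. (-1)^(s-1) * real (n choose s) / (real s - 1/2))"
proof -
  have t: "coeff ((pderiv^^(n-s)) (pA n A) * (Dp c d)^(n-s)) n = fact n / fact s * d^(n-s)" if "s \<in> {1..n}" for s
  proof -
    have d1: "degree ((pderiv^^(n-s)) (pA n A)) = s" using that by (simp add: degree_pderiv_iter degree_pA assms)
    have dD: "degree (Dp c d) = 1" using assms by (simp add: Dp_def)
    have d2: "degree ((Dp c d)^(n-s)) = n - s" using dD by (subst degree_power_eq) (auto simp: Dp_def assms)
    have l2: "coeff ((Dp c d)^(n-s)) (n-s) = d^(n-s)"
      using lead_coeff_power[of "Dp c d" "n-s"] d2 dD by (simp add: Dp_def)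
    have l1: "coeff ((pderiv^^(n-s)) (pA n A)) s = fact n / fact s"
    proof -
      have "coeff ((pderiv^^(n-s)) (pA n A)) s = pochhammer (of_nat (Suc s)) (n-s)"
        using that by (simp add: coeff_pderiv_iter pA_def coeff_pA assms)
      also have "\<dots> = fact n / fact s" using poch_fact[of s "n-s"] that
        by (simp add: field_simps)
      finally show ?thesis .
    qed
    have "coeff ((pderiv^^(n-s)) (pA n A) * (Dp c d)^(n-s)) n
        = coeff ((pderiv^^(n-s)) (pA n A) * (Dp c d)^(n-s)) (degree ((pderiv^^(n-s)) (pA n A)) + degree ((Dp c d)^(n-s)))"
      using d1 d2 that by simp
    also have "\<dots> = fact n / fact s * d^(n-s)" by (subst coeff_mult_degree_sum) (simp add: d1 d2 l1 l2)
    finally show ?thesis .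
  qed
  have "coeff (Qp n A c d) n = (\<Sum>s=1..n. (-1)^(s-1) / (real s - 1/2) * d^(s-1) / fact (n-s) * (fact n / fact s * d^(n-s)))"
    by (simp add: Qp_def coeff_sum t)
  also have "\<dots> = (\<Sum>s=1..n. d^(n-1) * ((-1)^(s-1) * real (n choose s) / (real s - 1/2)))"
  proof (rule sum.cong)
    fix s assume s: "s \<in> {1..n}"
    have E1: "d^(n-1) = d^(s-1) * d^(n-s)" using s by (simp add: power_add[symmetric])
    have E2: "fact n = fact s * fact (n-s) * real (n choose s)" using s
      by (simp add: binomial_fact)
    have ne: "real s - 1/2 \<noteq> 0" using s by simp
    show "(-1)^(s-1) / (real s - 1/2) * d^(s-1) / fact (n-s) * (fact n / fact s * d^(n-s))
       = d^(n-1) * ((-1)^(s-1) * real (n choose s) / (real s - 1/2))"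
      unfolding E1 E2 using ne by (simp add: field_simps)
  qed simp
  finally show ?thesis by (simp add: sum_distrib_left)
qed

lemma const_poly_power: "[:a::real:]^k = [:a^k:]"
  by (induction k) auto

lemma Wp_nz1: assumes "A n = 1" "d \<noteq> 0" "n \<ge> 1"
  shows "Wp n A c d \<noteq> 0"
proof -
  obtain m where m: "n = Suc m" using assms by (cases n) auto
  define S where "S = (\<Sum>s=1..n. (-1)^(s-1) * real (n choose s) / (real s - 1/2))"
  have cQ: "coeff (Qp n A c d) n = d^(n-1) * S" using coeff_Qp_top[of A n d c] assms S_def by simp
  have cQh: "coeff (Qp n A c d) (Suc n) = 0" by (rule coeff_Qp_high)
  have dD: "degree (Dp c d) = 1" using assms by (simp add: Dp_def)
  have c1: "coeff ((Dp c d)^n) n = d^n"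
  proof -
    have "degree ((Dp c d)^n) = n" using dD by (subst degree_power_eq) (auto simp: Dp_def assms)
    then show ?thesis using lead_coeff_power[of "Dp c d" n] dD by (simp add: Dp_def)
  qed
  have c2: "coeff (Dp c d * pderiv (Qp n A c d)) n = d * real n * coeff (Qp n A c d) n"
    using cQh unfolding m by (simp add: Dp_def coeff_pderiv)
  have "coeff (Wp n A c d) n = d^n + d * real n * (d^(n-1) * S) - (real n - 1/2) * d * (d^(n-1) * S)"
    unfolding Wp_def by (simp add: c1 c2 cQ)
  also have "\<dots> = d^n * (1 + S/2)"
    unfolding m by (simp add: field_simps)
  also have "\<dots> = d^n * (fact n / pochhammer (1/2) n)" unfolding S_def by (simp only: qS_eq)
  finally have "coeff (Wp n A c d) n \<noteq> 0"
    using assms poch_nz[of "1/2" n] by simp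
  then show ?thesis by auto
qed

lemma Wp_nz2: assumes "A n = 1" "c \<noteq> 0" "n \<ge> 1"
  shows "Wp n A c 0 \<noteq> 0"
proof -
  obtain m where m: "n = Suc m" using assms by (cases n) auto
  have D0: "Dp c 0 = [:-4*c:]" by (simp add: Dp_def)
  have t1: "coeff ((pderiv^^(n-1)) (pA n A) * (Dp c 0)^(n-1)) 1 = (-4*c)^(n-1) * fact n"
  proof -
    have "coeff ((pderiv^^(n-1)) (pA n A)) 1 = pochhammer 2 m"
      using assms by (simp add: coeff_pderiv_iter pA_def coeff_pA m)
    also have "\<dots> = fact n" unfolding m pochhammer_fact by (simp add: pochhammer_rec)
    finally show ?thesis by (simp add: D0 const_poly_power)
  qed
  have "coeff (Qp n A c 0) 1 = (\<Sum>s=1..n. (-1)^(s-1) / (real s - 1/2) * 0^(s-1) / fact (n-s)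
                   * coeff ((pderiv^^(n-s)) (pA n A) * (Dp c 0)^(n-s)) 1)"
    by (simp add: Qp_def coeff_sum)
  also have "\<dots> = 2 / fact (n-1) * coeff ((pderiv^^(n-1)) (pA n A) * (Dp c 0)^(n-1)) 1"
    using assms by (subst sum.atLeast_Suc_atMost) (auto intro!: sum.neutral)
  also have "\<dots> = 2 * real n * (-4*c)^(n-1)" by (simp only: t1) (simp add: m field_simps)
  finally have cQ1: "coeff (Qp n A c 0) 1 = 2 * real n * (-4*c)^(n-1)" .
  have "coeff (Wp n A c 0) 0 = (-4*c)^n + (-4*c) * coeff (Qp n A c 0) 1"
    unfolding Wp_def by (simp add: coeff_0_power coeff_mult_0 coeff_pderiv D0)
  also have "\<dots> = (-4*c)^n * (1 + 2 * real n)" by (simp only: cQ1) (simp add: m field_simps)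
  finally have "coeff (Wp n A c 0) 0 \<noteq> 0" using assms by simp
  then show ?thesis by auto
qed



lemma part1_K:
  fixes x :: "real \<Rightarrow> real" and I :: "real set" and u u' :: "real \<Rightarrow> real" and t :: real
  assumes I_open: "open I" and tI: "t \<in> I" and I_pos: "I \<subseteq> {0<..}"
    and du: "(u has_real_derivative u' t) (at t)" and unz: "u t \<noteq> 0" and u_def: "u = deriv x"
  shows "gauss_curv_orth (\<lambda>(a, y). (deriv x a)\<^sup>2 / a\<^sup>2) (\<lambda>(a, y). 1 / a) (t, 0)
     = - ((u t)\<^sup>2 + 2 * t * u t * u' t) / (4 * (u t)^4)"
proof -
  define E where "E = (\<lambda>(a::real, y::real). (deriv x a)\<^sup>2 / a\<^sup>2)"
  define G where "G = (\<lambda>(a::real, y::real). 1 / a)"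
  have tpos: "t > 0" using tI I_pos by auto
  have p2: "pd2 (\<lambda>q. pd2 E q / sqrt (E q * G q)) (t, 0) = 0"
    by (simp add: pd2_def E_def)
  have G1: "pd1 G (s, 0) = - 1 / s\<^sup>2" if "s \<noteq> 0" for s
    unfolding pd1_def G_def using that
    by (intro DERIV_imp_deriv) (auto intro!: derivative_eq_intros simp: power2_eq_square field_simps)
  define h where "h = (\<lambda>s. - 1 / sqrt (s * (u s)\<^sup>2))"
  have sq: "sqrt (w / s\<^sup>2 * (1 / s)) = sqrt (s * w) / s\<^sup>2" if "s > 0" "w \<ge> 0" for s w :: real
  proof -
    have "w / s\<^sup>2 * (1 / s) = (s * w) / (s\<^sup>2)\<^sup>2" using that by (simp add: field_simps power2_eq_square)
    moreover have "sqrt (s ^ 4) = s\<^sup>2"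
    proof -
      have e: "s ^ 4 = (s\<^sup>2)\<^sup>2" by simp
      have "sqrt ((s\<^sup>2)\<^sup>2) = s\<^sup>2" by (simp only: real_sqrt_abs) simp
      then show ?thesis by (simp only: e)
    qed
    ultimately show ?thesis using that by (simp add: real_sqrt_divide)
  qed
  have eqh: "pd1 G (s, 0) / sqrt (E (s, 0) * G (s, 0)) = h s" if "s \<in> I" for s
  proof -
    have s0: "s > 0" using that I_pos by auto
    have A1: "sqrt (E (s, 0) * G (s, 0)) = sqrt (s * (u s)\<^sup>2) / s\<^sup>2"
      using sq[OF s0, of "(u s)\<^sup>2"] by (simp add: E_def G_def u_def)
    have A2: "pd1 G (s, 0) = - 1 / s\<^sup>2" using G1[of s] s0 by simp
    have "pd1 G (s, 0) / sqrt (E (s, 0) * G (s, 0)) = (- 1 / s\<^sup>2) / (sqrt (s * (u s)\<^sup>2) / s\<^sup>2)"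
      by (simp only: A1 A2)
    also have "\<dots> = h s" using s0 unfolding h_def
      by (cases "sqrt (s * (u s)\<^sup>2) = 0") (auto simp: field_simps)
    finally show ?thesis .
  qed
  define w where "w = t * (u t)\<^sup>2"
  have wpos: "w > 0" using tpos unz by (simp add: w_def)
  define h' where "h' = ((u t)\<^sup>2 + 2 * t * u t * u' t) / (2 * w * sqrt w)"
  have hd: "(h has_real_derivative h') (at t)"
  proof -
    have d1: "((\<lambda>s. s * (u s)\<^sup>2) has_real_derivative ((u t)\<^sup>2 + t * (2 * u t * u' t))) (at t)"
      by (rule derivative_eq_intros refl du)+ simp
    have d2: "((\<lambda>s. sqrt (s * (u s)\<^sup>2)) has_real_derivative (inverse (sqrt w) / 2 * ((u t)\<^sup>2 + t * (2 * u t * u' t)))) (at t)"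
      using DERIV_chain[OF DERIV_real_sqrt[of "t * (u t)\<^sup>2"] d1] wpos by (simp add: o_def w_def)
    note d3 = DERIV_divide[OF DERIV_const[of "-1"] d2]
    have "sqrt (t * (u t)\<^sup>2) \<noteq> 0" using tpos unz by simp
    from d3[OF this] show ?thesis unfolding h_def
      apply (rule DERIV_cong)
      using wpos unfolding h'_def w_def[symmetric] by (simp add: field_simps)
  qed
  have P: "pd1 (\<lambda>q. pd1 G q / sqrt (E q * G q)) (t, 0) = h'"
    unfolding pd1_def
    apply simp
    apply (rule DERIV_imp_deriv)
    apply (rule has_field_derivative_transform_within_open[OF hd I_open tI])
    using eqh by (simp add: pd1_def)
  have S: "sqrt (E (t, 0) * G (t, 0)) = sqrt w / t\<^sup>2"
    using sq[OF tpos, of "(u t)\<^sup>2"] by (simp add: E_def G_def u_def w_def)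
  have ww: "sqrt w * sqrt w = w" using wpos by simp
  have sw: "sqrt w > 0" using wpos by simp
  obtain r where r: "r = sqrt w" by blast
  have rr: "r * r = w" and rpos: "r > 0" using ww sw r by auto
  have "gauss_curv_orth E G (t, 0) = - (1 / (2 * (r / t\<^sup>2))) * (((u t)\<^sup>2 + 2 * t * u t * u' t) / (2 * w * r) + 0)"
    unfolding gauss_curv_orth_def p2 P S h'_def r by simp
  also have "\<dots> = - (t\<^sup>2 * ((u t)\<^sup>2 + 2 * t * u t * u' t)) / (4 * (r * r) * w)"
    using rpos wpos tpos by (simp add: field_simps)
  also have "\<dots> = - ((u t)\<^sup>2 + 2 * t * u t * u' t) / (4 * (u t)^4)"
    unfolding rr using tpos unz by (simp add: w_def field_simps power2_eq_square eval_nat_numeral)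
  finally have "gauss_curv_orth E G (t, 0) = - ((u t)\<^sup>2 + 2 * t * u t * u' t) / (4 * (u t)^4)" .
  then show ?thesis by (simp add: E_def G_def)
qed

lemma poly_pderiv_top: assumes "A n = 1"
  shows "poly ((pderiv^^n) (pA n A)) t = fact n"
proof -
  have "degree ((pderiv^^n) (pA n A)) = 0" by (simp add: degree_pderiv_iter degree_pA assms)
  then have "(pderiv^^n) (pA n A) = [:coeff ((pderiv^^n) (pA n A)) 0:]" by (rule degree_0_id[symmetric])
  moreover have "coeff ((pderiv^^n) (pA n A)) 0 = fact n"
    by (simp add: coeff_pderiv_iter pA_def coeff_pA assms pochhammer_fact)
  ultimately show ?thesis by (metis poly_pCons poly_0 mult_zero_right add.right_neutral)
qed

lemma polyF_pA: "polyF n A = poly (pA n A)"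
  unfolding pA_def poly_pA[symmetric] by (rule ext) (simp add: polyF_def)

lemma term_alg: fixes P f p U Dj Dr dd q :: real and j :: nat
  assumes "f \<noteq> 0" "p \<noteq> 0" "Dj \<noteq> 0" "Dr \<noteq> 0" "q \<noteq> 0"
  shows "P / f * (1 / (p * q)) * ((-dd)^j * p * (U / Dj))
       = U * ((-1)^j / q * dd^j / f) * (P * Dr) / (Dr * Dj)"
  using assms by (simp add: power_minus[of dd] field_simps)

lemma part1:
  fixes n :: nat and A :: "nat \<Rightarrow> real" and x :: "real \<Rightarrow> real" and I :: "real set"
  assumes n2: "n \<ge> 2"
    and An: "A n = 1"
    and I_open: "open I" and I_int: "is_interval I" and I_ne: "I \<noteq> {}"
    and I_pos: "I \<subseteq> {0<..}"
    and x_diff: "\<forall>k<n. \<forall>t\<in>I. ((deriv ^^ k) x) differentiable (at t)"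
    and x_sol: "\<forall>a\<in>I. OpF n (polyF n A) x a = 0"
    and xdot_nz: "\<forall>a\<in>I. deriv x a \<noteq> 0"
  shows "\<not> (\<exists>c. \<forall>p \<in> I \<times> UNIV.
             gauss_curv_orth (\<lambda>(a, y). (deriv x a)\<^sup>2 / a\<^sup>2) (\<lambda>(a, y). 1 / a) p = c)"
proof
  assume "\<exists>c. \<forall>p \<in> I \<times> UNIV. gauss_curv_orth (\<lambda>(a, y). (deriv x a)\<^sup>2 / a\<^sup>2) (\<lambda>(a, y). 1 / a) p = c"
  then obtain c where hc: "\<forall>p \<in> I \<times> UNIV. gauss_curv_orth (\<lambda>(a, y). (deriv x a)\<^sup>2 / a\<^sup>2) (\<lambda>(a, y). 1 / a) p = c"
    by blast
  define u where "u = deriv x"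
  define u' where "u' = deriv u"
  have tpos: "t > 0" if "t \<in> I" for t using that I_pos by auto
  have dx: "(x has_real_derivative u t) (at t)" if "t \<in> I" for t
  proof -
    have "((deriv^^0) x) differentiable (at t)" using x_diff[rule_format, of 0 t] n2 that by auto
    then show ?thesis unfolding u_def by (simp add: DERIV_deriv_iff_real_differentiable)
  qed
  have du: "(u has_real_derivative u' t) (at t)" if "t \<in> I" for t
  proof -
    have "((deriv^^1) x) differentiable (at t)" using x_diff[rule_format, of 1 t] n2 that by auto
    then show ?thesis unfolding u'_def u_def by (simp add: DERIV_deriv_iff_real_differentiable)
  qed
  have unz: "u t \<noteq> 0" if "t \<in> I" for t using xdot_nz that u_def by auto
  have eqK: "(u t)\<^sup>2 + 2 * t * u t * u' t = - 4 * c * (u t)^4" if "t \<in> I" for t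
  proof -
    have "gauss_curv_orth (\<lambda>(a, y). (deriv x a)\<^sup>2 / a\<^sup>2) (\<lambda>(a, y). 1 / a) (t, 0) = c"
      using hc that by auto
    then have "- ((u t)\<^sup>2 + 2 * t * u t * u' t) / (4 * (u t)^4) = c"
      using part1_K[of I t u u' x, OF I_open that I_pos du[OF that] unz[OF that] u_def] by simp
    then show ?thesis using unz[OF that] by (simp add: field_simps)
  qed
  have u'form: "u' t = - (u t + 4 * c * (u t)^3) / (2 * t)" if "t \<in> I" for t
  proof -
    have "u t * (2 * t * u' t) = u t * (- (u t + 4 * c * (u t)^3))"
      using eqK[OF that] by (simp add: algebra_simps power2_eq_square eval_nat_numeral)
    then have "2 * t * u' t = - (u t + 4 * c * (u t)^3)" using unz[OF that] by simp
    then show ?thesis using tpos[OF that] by (simp add: field_simps)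
  qed
  define hh where "hh = (\<lambda>s. (1 / (u s)\<^sup>2 + 4 * c) / s)"
  have hd0: "(hh has_field_derivative 0) (at s within I)" if "s \<in> I" for s
  proof -
    have d1: "((\<lambda>s. (u s)\<^sup>2) has_real_derivative 2 * u s * u' s) (at s)"
      by (rule derivative_eq_intros refl du[OF that])+ simp
    have "(u s)\<^sup>2 \<noteq> 0" using unz[OF that] by simp
    note d2 = DERIV_divide[OF DERIV_const[of 1] d1 this]
    note d3 = DERIV_add[OF d2 DERIV_const[of "4*c"]]
    have "s \<noteq> 0" using tpos[OF that] by simp
    note d4 = DERIV_divide[OF d3 DERIV_ident this]
    have "(hh has_real_derivative 0) (at s)"
      unfolding hh_def
      apply (rule DERIV_cong[OF d4])
      using unz[OF that] tpos[OF that] unfolding u'form[OF that]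
      by (auto simp: field_simps power2_eq_square eval_nat_numeral)
    then show ?thesis by (rule has_field_derivative_at_within)
  qed
  obtain d where hhd: "\<forall>s\<in>I. hh s = d"
    using has_field_derivative_zero_constant[OF is_interval_convex[OF I_int] hd0] by blast
  define D where "D = (\<lambda>t. d * t - 4 * c)"
  have Dq: "(u t)\<^sup>2 * D t = 1" if "t \<in> I" for t
  proof -
    have "(1 / (u t)\<^sup>2 + 4 * c) / t = d" using hhd that hh_def by auto
    then show ?thesis using tpos[OF that] unz[OF that] by (simp add: D_def field_simps)
  qed
  have Dnz: "D t \<noteq> 0" if "t \<in> I" for t using Dq[OF that] by auto
  have u'eq: "u' t = - d * (u t)^3 / 2" if "t \<in> I" for t
  proof -
    have "1 + 4 * c * (u t)\<^sup>2 = d * t * (u t)\<^sup>2" using Dq[OF that] by (simp add: D_def algebra_simps)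
    then have "u t * (1 + 4 * c * (u t)\<^sup>2) = u t * (d * t * (u t)\<^sup>2)" by simp
    then have "u t + 4 * c * (u t)^3 = d * t * (u t)^3"
      by (simp add: algebra_simps power2_eq_square power3_eq_cube)
    then show ?thesis unfolding u'form[OF that] using tpos[OF that] by (simp add: field_simps)
  qed
  have dern: "(deriv^^(Suc k)) x t = (-d)^k * pochhammer (1/2) k * (u t)^(2*k+1)" if "t \<in> I" for k t
    using that
  proof (induction k arbitrary: t)
    case 0 then show ?case by (simp add: u_def)
  next
    case (Suc k)
    have ev: "eventually (\<lambda>s. (deriv^^(Suc k)) x s = (-d)^k * pochhammer (1/2) k * (u s)^(2*k+1)) (nhds t)"
      using eventually_nhds_in_open[OF I_open Suc.prems] by (rule eventually_mono) (use Suc.IH in blast)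
    have "(deriv^^(Suc (Suc k))) x t = deriv ((deriv^^(Suc k)) x) t" by simp
    also have "\<dots> = deriv (\<lambda>s. (-d)^k * pochhammer (1/2) k * (u s)^(2*k+1)) t"
      by (rule deriv_cong_ev[OF ev refl])
    also have "\<dots> = (-d)^k * pochhammer (1/2) k * (of_nat (2*k+1) * (u' t * (u t)^(2*k+1 - Suc 0)))"
      by (rule DERIV_imp_deriv, rule DERIV_cmult, rule DERIV_power, rule du[OF Suc.prems])
    also have "\<dots> = (-d)^(Suc k) * pochhammer (1/2) (Suc k) * (u t)^(2*(Suc k)+1)"
    proof -
      have e0: "2*(Suc k)+1 = 2*k + 3" by simp
      have e1: "(u t)^(2*(Suc k)+1) = (u t)^(2*k) * (u t)^3" unfolding e0 by (simp only: power_add)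
      show ?thesis unfolding u'eq[OF Suc.prems] pochhammer_Suc e1 by (simp add: field_simps)
    qed
    finally show ?case .
  qed
  have polyD: "poly (Dp c d) t = D t" for t by (simp add: Dp_def D_def algebra_simps)
  have Opf: "OpF n (polyF n A) x t = x t + u t * poly (Qp n A c d) t / (D t)^(n-1)" if tI: "t \<in> I" for t
  proof -
    define P where "P = (\<lambda>s. poly ((pderiv^^(n-s)) (pA n A)) t)"
    have "OpF n (polyF n A) x t = (\<Sum>s=0..n. P s / fact (n-s) * (1 / pochhammer (1/2) s) * (deriv^^s) x t)"
      unfolding OpF_def polyF_pA deriv_poly_iter P_def by simp
    also have "\<dots> = P 0 / fact n * (deriv^^0) x t + (\<Sum>s=Suc 0..n. P s / fact (n-s) * (1 / pochhammer (1/2) s) * (deriv^^s) x t)"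
      by (subst sum.atLeast_Suc_atMost) auto
    also have "P 0 / fact n * (deriv^^0) x t = x t"
      unfolding P_def using poly_pderiv_top[of A n t] An by simp
    also have "(\<Sum>s=Suc 0..n. P s / fact (n-s) * (1 / pochhammer (1/2) s) * (deriv^^s) x t)
       = (\<Sum>s=Suc 0..n. u t * ((-1)^(s-1) / (real s - 1/2) * d^(s-1) / fact (n-s)) * (P s * (D t)^(n-s)) / (D t)^(n-1))"
    proof (rule sum.cong[OF refl])
      fix s assume s: "s \<in> {Suc 0..n}"
      then obtain j where j: "s = Suc j" by (cases s) auto
      have ds: "(deriv^^s) x t = (-d)^j * pochhammer (1/2) j * (u t)^(2*j+1)" using dern[OF tI] j by simp
      have uD: "(u t)^(2*j+1) = u t / (D t)^j"
      proof -
        have "((u t)\<^sup>2)^j * (D t)^j = 1" using Dq[OF tI] by (simp add: power_mult_distrib[symmetric])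
        moreover have "(u t)^(2*j) = ((u t)\<^sup>2)^j" by (simp add: power_mult)
        ultimately have "(u t)^(2*j) = 1 / (D t)^j" using Dnz[OF tI] by (simp add: field_simps)
        then show ?thesis by (simp add: field_simps)
      qed
      have Dn: "(D t)^(n-1) = (D t)^(n-s) * (D t)^j" using s j by (simp add: power_add[symmetric])
      have pn: "pochhammer (1/2::real) j \<noteq> 0" by (rule poch_nz) auto
      have e3: "real s - 1/2 = 1/2 + real j" using j by simp
      show "P s / fact (n-s) * (1 / pochhammer (1/2) s) * (deriv^^s) x t
         = u t * ((-1)^(s-1) / (real s - 1/2) * d^(s-1) / fact (n-s)) * (P s * (D t)^(n-s)) / (D t)^(n-1)"
      proof -
        have "(D t)^(n - Suc j) \<noteq> 0" "(D t)^j \<noteq> 0" using Dnz[OF tI] by auto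
        moreover have "1/2 + real j \<noteq> 0" by (simp add: add_pos_nonneg)
        ultimately show ?thesis
          unfolding ds uD Dn e3 unfolding j pochhammer_Suc using pn
          using term_alg[where f="fact (n - Suc j)" and p="pochhammer (1/2) j" and Dj="(D t)^j"
              and Dr="(D t)^(n - Suc j)" and P="P (Suc j)" and dd=d and j=j and U="u t" and q="1/2 + real j"]
          by simp
      qed
    qed
    also have "\<dots> = u t * poly (Qp n A c d) t / (D t)^(n-1)"
      unfolding Qp_def poly_sum poly_smult poly_mult poly_power polyD P_def
      by (simp add: sum_divide_distrib sum_distrib_left mult.assoc)
    finally show ?thesis .
  qed
  obtain k where k: "n = Suc (Suc k)" using n2 by (metis add_2_eq_Suc le_Suc_ex)
  have Wz: "poly (Wp n A c d) a = 0" if aI: "a \<in> I" for a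
  proof -
    define Q where "Q = Qp n A c d"
    define \<Phi> where "\<Phi> = (\<lambda>s. x s + u s * poly Q s / (D s)^(Suc k))"
    have \<Phi>0: "0 = \<Phi> s" if "s \<in> I" for s
      using Opf[OF that] x_sol that k by (simp add: \<Phi>_def Q_def)
    have d\<Phi>0: "(\<Phi> has_real_derivative 0) (at a)"
      by (rule has_field_derivative_transform_within_open[OF DERIV_const I_open aI \<Phi>0])
    have dQ: "(poly Q has_real_derivative poly (pderiv Q) a) (at a)" by simp
    have dD1: "(D has_real_derivative d) (at a)" unfolding D_def
      by (rule derivative_eq_intros refl)+ simp
    have dD: "((\<lambda>s. D s ^ Suc k) has_real_derivative of_nat (Suc k) * (d * D a ^ (Suc k - Suc 0))) (at a)"
      by (rule DERIV_power[OF dD1])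
    note dUQ = DERIV_mult[OF du[OF aI] dQ]
    have Dp0: "D a ^ Suc k \<noteq> 0" using Dnz[OF aI] by simp
    note ddiv = DERIV_divide[OF dUQ dD Dp0]
    note dall = DERIV_add[OF dx[OF aI] ddiv]
    have E0: "u a + ((u' a * poly Q a + poly (pderiv Q) a * u a) * D a ^ Suc k
              - u a * poly Q a * (of_nat (Suc k) * (d * D a ^ (Suc k - Suc 0)))) / (D a ^ Suc k * D a ^ Suc k) = 0"
      using DERIV_unique[OF dall d\<Phi>0[unfolded \<Phi>_def]] by simp
    have u'2: "u' a = - d * u a / (2 * D a)"
    proof -
      have "(u a)^3 = u a / D a" using Dq[OF aI] Dnz[OF aI] by (simp add: power3_eq_cube power2_eq_square field_simps)
      then show ?thesis unfolding u'eq[OF aI] by simp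
    qed
    have Wv: "poly (Wp n A c d) a = D a ^ Suc (Suc k) + D a * poly (pderiv Q) a - (real (Suc (Suc k)) - 1/2) * d * poly Q a"
      unfolding Wp_def Q_def k by (simp add: polyD)
    obtain Dk where Dk: "Dk = D a ^ k" by blast
    have Dknz: "Dk \<noteq> 0" using Dnz[OF aI] Dk by simp
    have P1: "D a ^ Suc k = D a * Dk" and P2: "D a ^ Suc (Suc k) = D a * D a * Dk" using Dk by simp_all
    have P0: "D a ^ (Suc k - Suc 0) = Dk" using Dk by simp
    have "u a * poly (Wp n A c d) a / (D a * D a * Dk) = u a + ((u' a * poly Q a + poly (pderiv Q) a * u a) * D a ^ Suc k
              - u a * poly Q a * (of_nat (Suc k) * (d * D a ^ (Suc k - Suc 0)))) / (D a ^ Suc k * D a ^ Suc k)"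
      unfolding Wv P0 P1 P2 u'2 using Dknz Dnz[OF aI] unz[OF aI]
      by (simp add: field_simps)
    then have "u a * poly (Wp n A c d) a / (D a * D a * Dk) = 0" using E0 by simp
    then show ?thesis using Dknz Dnz[OF aI] unz[OF aI] by simp
  qed
  have "Wp n A c d = 0"
  proof (rule ccontr)
    assume "Wp n A c d \<noteq> 0"
    then have "finite {s. poly (Wp n A c d) s = 0}" by (rule poly_roots_finite)
    moreover have "I \<subseteq> {s. poly (Wp n A c d) s = 0}" using Wz by auto
    ultimately have "finite I" by (rule finite_subset[rotated])
    then show False using finite_imp_not_open I_open I_ne by blast
  qed
  moreover have "Wp n A c d \<noteq> 0"
  proof (cases "d = 0")
    case False then show ?thesis using Wp_nz1[of A n d c] An n2 by simp
  next
    case True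
    obtain t where "t \<in> I" using I_ne by blast
    then have "c \<noteq> 0" using Dq[of t] True by (auto simp: D_def)
    then show ?thesis using Wp_nz2[of A n c] An n2 True by simp
  qed
  ultimately show False by simp
qed



lemma dX: assumes "a > 0"
  shows "((\<lambda>(a::real, y::real). y / sqrt a) has_derivative (\<lambda>h. snd h / sqrt a - y * fst h / (2 * a * sqrt a))) (at (a, y))"
proof -
  have e: "(\<lambda>(a::real, y::real). y / sqrt a) = (\<lambda>p. snd p / sqrt (fst p))" by auto
  have s: "sqrt a * sqrt a = a" using assms by simp
  show ?thesis unfolding e
    apply (rule derivative_eq_intros refl | simp add: assms)+
    using assms s by (auto simp: field_simps)
qed

lemma dM: assumes "a > 0"
  shows "((\<lambda>(a::real, y::real). - 1 / sqrt a) has_derivative (\<lambda>h. fst h / (2 * a * sqrt a))) (at (a, y))"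
proof -
  have e: "(\<lambda>(a::real, y::real). - 1 / sqrt a) = (\<lambda>p. - 1 / sqrt (fst p))" by auto
  have s: "sqrt a * sqrt a = a" using assms by simp
  show ?thesis unfolding e
    apply (rule derivative_eq_intros refl | simp add: assms)+
    using assms s by (auto simp: field_simps)
qed

lemma dP: assumes "a > 0" "(\<Phi> has_real_derivative \<Phi>') (at a)"
  shows "((\<lambda>(a::real, y::real). y\<^sup>2 / sqrt a + 2 * \<Phi> a) has_derivative
     (\<lambda>h. 2 * y * snd h / sqrt a - y\<^sup>2 * fst h / (2 * a * sqrt a) + 2 * (\<Phi>' * fst h))) (at (a, y))"
proof -
  have e: "(\<lambda>(a::real, y::real). y\<^sup>2 / sqrt a + 2 * \<Phi> a) = (\<lambda>p. (snd p)\<^sup>2 / sqrt (fst p) + 2 * \<Phi> (fst p))" by auto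
  have s: "sqrt a * sqrt a = a" using assms by simp
  have c: "((\<lambda>p. \<Phi> (fst p)) has_derivative (\<lambda>h. \<Phi>' * fst h)) (at (a, y))"
  proof -
    have f: "(fst has_derivative fst) (at (a, y))" by (rule bounded_linear_imp_has_derivative[OF bounded_linear_fst])
    have g: "(\<Phi> has_derivative (*) \<Phi>') (at (fst (a, y)))" using assms(2) by (simp add: has_field_derivative_def)
    show ?thesis using has_derivative_compose[OF f g]
      by (simp add: o_def mult.commute)
  qed
  have c2: "((\<lambda>p. 2 * \<Phi> (fst p)) has_derivative (\<lambda>h. 2 * (\<Phi>' * fst h))) (at (a, y))"
    using has_derivative_mult_right[OF c, of 2] by simp
  have c1: "((\<lambda>p. (snd p)\<^sup>2 / sqrt (fst p)) has_derivative (\<lambda>h. 2 * y * snd h / sqrt a - y\<^sup>2 * fst h / (2 * a * sqrt a))) (at (a, y))"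
    apply (rule derivative_eq_intros refl | simp add: assms)+
    using assms s by (auto simp: field_simps power2_eq_square)
  show ?thesis unfolding e using has_derivative_add[OF c1 c2] by simp
qed

lemma half_sum_deriv:
  fixes f g :: "'a::real_normed_vector \<Rightarrow> real"
  assumes "(f has_derivative f') F" "(g has_derivative g') F"
  shows "((\<lambda>p. (f p + g p) / 2) has_derivative (\<lambda>h. (f' h + g' h) / 2)) F"
  using has_derivative_mult_right[OF has_derivative_add[OF assms], of "1/2"] by simp

lemma half_diff_deriv:
  fixes f g :: "'a::real_normed_vector \<Rightarrow> real"
  assumes "(f has_derivative f') F" "(g has_derivative g') F"
  shows "((\<lambda>p. (f p - g p) / 2) has_derivative (\<lambda>h. (f' h - g' h) / 2)) F"
  using has_derivative_mult_right[OF has_derivative_diff[OF assms], of "1/2"] by simp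

lemma alg2: fixes s y v h1 h2 :: real assumes "s > 0"
  shows "(h2 / s - y * h1 / (2 * (s * s) * s))\<^sup>2
     + ((2 * y * h2 / s - y\<^sup>2 * h1 / (2 * (s * s) * s) + 2 * (v\<^sup>2 / s * h1) + h1 / (2 * (s * s) * s)) / 2)\<^sup>2
     - ((2 * y * h2 / s - y\<^sup>2 * h1 / (2 * (s * s) * s) + 2 * (v\<^sup>2 / s * h1) - h1 / (2 * (s * s) * s)) / 2)\<^sup>2
     = v\<^sup>2 / (s * s)\<^sup>2 * h1\<^sup>2 + h2\<^sup>2 / (s * s)"
  using assms by (simp add: field_simps power2_eq_square)

theorem proposition7:
  fixes n :: nat and A :: "nat \<Rightarrow> real" and x :: "real \<Rightarrow> real" and I :: "real set"
  assumes n2: "n \<ge> 2"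
    and An: "A n = 1"
    and I_open: "open I" and I_int: "is_interval I" and I_ne: "I \<noteq> {}"
    and I_pos: "I \<subseteq> {0<..}"
    and x_diff: "\<forall>k<n. \<forall>t\<in>I. ((deriv ^^ k) x) differentiable (at t)"
    and x_sol: "\<forall>a\<in>I. OpF n (polyF n A) x a = 0"
    and xdot_nz: "\<forall>a\<in>I. deriv x a \<noteq> 0"
  shows "\<not> (\<exists>c. \<forall>p \<in> I \<times> UNIV.
             gauss_curv_orth (\<lambda>(a, y). (deriv x a)\<^sup>2 / a\<^sup>2) (\<lambda>(a, y). 1 / a) p = c)
       \<and> (\<forall>\<Phi>. (\<forall>a\<in>I. (\<Phi> has_real_derivative (deriv x a)\<^sup>2 / sqrt a) (at a)) \<longrightarrow>
            (let X = (\<lambda>(a, y). y / sqrt a);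
                 YmZ = (\<lambda>(a, y). - 1 / sqrt a);
                 YpZ = (\<lambda>(a, y). y\<^sup>2 / sqrt a + 2 * \<Phi> a);
                 Y = (\<lambda>p. (YpZ p + YmZ p) / 2);
                 Z = (\<lambda>p. (YpZ p - YmZ p) / 2)
             in \<forall>p \<in> I \<times> UNIV. \<exists>DX DY DZ.
                  (X has_derivative DX) (at p) \<and> (Y has_derivative DY) (at p) \<and>
                  (Z has_derivative DZ) (at p) \<and>
                  (\<forall>h. (DX h)\<^sup>2 + (DY h)\<^sup>2 - (DZ h)\<^sup>2
                        = (deriv x (fst p))\<^sup>2 / (fst p)\<^sup>2 * (fst h)\<^sup>2 + (snd h)\<^sup>2 / fst p)))"
proof (rule conjI)
  show "\<not> (\<exists>c. \<forall>p \<in> I \<times> UNIV.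
             gauss_curv_orth (\<lambda>(a, y). (deriv x a)\<^sup>2 / a\<^sup>2) (\<lambda>(a, y). 1 / a) p = c)"
    by (rule part1[OF n2 An I_open I_int I_ne I_pos x_diff x_sol xdot_nz])
next
  show "\<forall>\<Phi>. (\<forall>a\<in>I. (\<Phi> has_real_derivative (deriv x a)\<^sup>2 / sqrt a) (at a)) \<longrightarrow>
            (let X = (\<lambda>(a, y). y / sqrt a);
                 YmZ = (\<lambda>(a, y). - 1 / sqrt a);
                 YpZ = (\<lambda>(a, y). y\<^sup>2 / sqrt a + 2 * \<Phi> a);
                 Y = (\<lambda>p. (YpZ p + YmZ p) / 2);
                 Z = (\<lambda>p. (YpZ p - YmZ p) / 2)
             in \<forall>p \<in> I \<times> UNIV. \<exists>DX DY DZ.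
                  (X has_derivative DX) (at p) \<and> (Y has_derivative DY) (at p) \<and>
                  (Z has_derivative DZ) (at p) \<and>
                  (\<forall>h. (DX h)\<^sup>2 + (DY h)\<^sup>2 - (DZ h)\<^sup>2
                        = (deriv x (fst p))\<^sup>2 / (fst p)\<^sup>2 * (fst h)\<^sup>2 + (snd h)\<^sup>2 / fst p))"
  proof (intro allI impI)
    fix \<Phi> :: "real \<Rightarrow> real"
    assume h\<Phi>: "\<forall>a\<in>I. (\<Phi> has_real_derivative (deriv x a)\<^sup>2 / sqrt a) (at a)"
    show "let X = (\<lambda>(a, y). y / sqrt a);
                 YmZ = (\<lambda>(a, y). - 1 / sqrt a);
                 YpZ = (\<lambda>(a, y). y\<^sup>2 / sqrt a + 2 * \<Phi> a);
                 Y = (\<lambda>p. (YpZ p + YmZ p) / 2);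
                 Z = (\<lambda>p. (YpZ p - YmZ p) / 2)
             in \<forall>p \<in> I \<times> UNIV. \<exists>DX DY DZ.
                  (X has_derivative DX) (at p) \<and> (Y has_derivative DY) (at p) \<and>
                  (Z has_derivative DZ) (at p) \<and>
                  (\<forall>h. (DX h)\<^sup>2 + (DY h)\<^sup>2 - (DZ h)\<^sup>2
                        = (deriv x (fst p))\<^sup>2 / (fst p)\<^sup>2 * (fst h)\<^sup>2 + (snd h)\<^sup>2 / fst p)"
      unfolding Let_def
    proof (intro ballI)
      fix p assume pI: "p \<in> I \<times> (UNIV :: real set)"
      obtain a y where p: "p = (a, y)" by (cases p)
      have aI: "a \<in> I" using pI p by auto
      have apos: "a > 0" using aI I_pos by auto
      define v where "v = deriv x a"
      have dPhi: "(\<Phi> has_real_derivative v\<^sup>2 / sqrt a) (at a)" using h\<Phi> aI v_def by auto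
      note DX = dX[OF apos, of y]
      note DM = dM[OF apos, of y]
      note DP = dP[OF apos dPhi, of y]
      note DY = half_sum_deriv[OF DP DM]
      note DZ = half_diff_deriv[OF DP DM]
      have s: "sqrt a * sqrt a = a" using apos by simp
      have sp: "sqrt a > 0" using apos by simp
      show "\<exists>DX DY DZ.
                  ((\<lambda>(a, y). y / sqrt a) has_derivative DX) (at p) \<and>
                  ((\<lambda>p. ((\<lambda>(a, y). y\<^sup>2 / sqrt a + 2 * \<Phi> a) p + (\<lambda>(a, y). - 1 / sqrt a) p) / 2) has_derivative DY) (at p) \<and>
                  ((\<lambda>p. ((\<lambda>(a, y). y\<^sup>2 / sqrt a + 2 * \<Phi> a) p - (\<lambda>(a, y). - 1 / sqrt a) p) / 2) has_derivative DZ) (at p) \<and>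
                  (\<forall>h. (DX h)\<^sup>2 + (DY h)\<^sup>2 - (DZ h)\<^sup>2
                        = (deriv x (fst p))\<^sup>2 / (fst p)\<^sup>2 * (fst h)\<^sup>2 + (snd h)\<^sup>2 / fst p)"
        unfolding p
        apply (rule exI, rule exI, rule exI, intro conjI)
           apply (rule DX)
          apply (rule DY)
         apply (rule DZ)
        apply (intro allI)
        subgoal for h
          using alg2[OF sp, of "snd h" y "fst h" v] apos unfolding v_def by simp
        done
    qed
  qed
qed

end
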